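(* For every rule $\mathcal{R}$ and every starting vertex, the greedy random walk on the complete graph $K_n=(V,E)$ satisfies \[ \mathbb{E}[C_E(K_n)] \le |E| + (1+o(1))\, n\log n, \] where $o(1)\to0$ as $n\to\infty$ uniformly in the rule and the starting vertex. (Indeed, the overhead is at most $\sum_{i=1}^{n-1}\frac{n-1}{n-i}$.)
   Context: A greedy random walk (GRW) on a connected locally finite graph $G=(V,E)$ with rule $\mathcal{R}$ started at $v_0$: $X_0=v_0$; with $H_t=\{\{X_{s-1},X_s\}:0<s\le t\}$ (edges traversed up to time $t$) and $J_t(v)=\{e\in E: v\in e, e\notin H_t\}$, if $J_t(X_t)\ne\emptyset$ then $X_{t+1}=w$ for some $w$ with $\{X_t,w\}\in J_t(X_t)$, chosen according to an arbitrary (possibly randomized, history-dependent) rule $\mathcal{R}$; if $J_t(X_t)=\emptyset$ then $X_{t+1}$ is a uniformly random neighbor of $X_t$. For finite $G$, the edge cover time is $C_E(G)=\min\{t:H_t=E\}$. $\log$ is the natural logarithm. *)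

theory Defs
  imports "HOL-Probability.Probability"
begin

text \<open>A (finite, simple) graph is given by its edge set E, a set of 2-element sets.
  A trajectory is the list [X_0, X_1, ..., X_t] in chronological order.\<close>

definition traversed :: "'a list \<Rightarrow> 'a set set" where
  "traversed xs = {{xs ! i, xs ! Suc i} | i. Suc i < length xs}"

definition unused_edges :: "'a set set \<Rightarrow> 'a list \<Rightarrow> 'a \<Rightarrow> 'a set set" where
  "unused_edges E xs v = {e \<in> E. v \<in> e \<and> e \<notin> traversed xs}"

definition nbrs :: "'a set set \<Rightarrow> 'a \<Rightarrow> 'a set" where
  "nbrs E v = {w. {v, w} \<in> E}"

definition valid_rule :: "'a set set \<Rightarrow> ('a list \<Rightarrow> 'a pmf) \<Rightarrow> bool" where
  "valid_rule E R \<longleftrightarrow> (\<forall>xs. unused_edges E xs (last xs) \<noteq> {} \<longrightarrow>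
      set_pmf (R xs) \<subseteq> {w. {last xs, w} \<in> unused_edges E xs (last xs)})"

definition grw_step :: "'a set set \<Rightarrow> ('a list \<Rightarrow> 'a pmf) \<Rightarrow> 'a list \<Rightarrow> 'a list pmf" where
  "grw_step E R xs =
     map_pmf (\<lambda>w. xs @ [w])
       (if unused_edges E xs (last xs) \<noteq> {} then R xs else pmf_of_set (nbrs E (last xs)))"

primrec grw :: "'a set set \<Rightarrow> ('a list \<Rightarrow> 'a pmf) \<Rightarrow> 'a \<Rightarrow> nat \<Rightarrow> 'a list pmf" where
  "grw E R v0 0 = return_pmf [v0]"
| "grw E R v0 (Suc t) = bind_pmf (grw E R v0 t) (grw_step E R)"

text \<open>Expected edge cover time, via E[C] = sum_{t>=0} P(C > t) = sum_t P(H_t does not cover E).\<close>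
definition expected_edge_cover_time :: "'a set set \<Rightarrow> ('a list \<Rightarrow> 'a pmf) \<Rightarrow> 'a \<Rightarrow> ennreal" where
  "expected_edge_cover_time E R v0 =
     (\<Sum>t. ennreal (measure_pmf.prob (grw E R v0 t) {xs. \<not> E \<subseteq> traversed xs}))"

definition Kn_edges :: "nat \<Rightarrow> nat set set" where
  "Kn_edges n = {{u, v} | u v. u < n \<and> v < n \<and> u \<noteq> v}"

end

theory Submission imports Defs begin

lemma traversed_snoc:
  assumes "xs \<noteq> []"
  shows "traversed (xs @ [w]) = insert {last xs, w} (traversed xs)"
proof -
  let ?ys = "xs @ [w]"
  have A: "{?ys ! i, ?ys ! Suc i} = {xs ! i, xs ! Suc i}" if "Suc i < length xs" for i
    using that by (simp add: nth_append)
  have B: "{?ys ! (length xs - 1), ?ys ! Suc (length xs - 1)} = {last xs, w}"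
    using assms by (simp add: nth_append last_conv_nth)
  have C: "Suc i < length ?ys \<longleftrightarrow> Suc i < length xs \<or> i = length xs - 1" for i
    using assms by (cases xs) auto
  show ?thesis
  proof (rule set_eqI, rule iffI)
    fix e assume "e \<in> traversed ?ys"
    then obtain i where e: "e = {?ys ! i, ?ys ! Suc i}" "Suc i < length ?ys"
      unfolding traversed_def by blast
    then show "e \<in> insert {last xs, w} (traversed xs)"
      using A B C unfolding traversed_def by blast
  next
    fix e assume "e \<in> insert {last xs, w} (traversed xs)"
    then show "e \<in> traversed ?ys"
    proof
      assume "e = {last xs, w}"
      then show ?thesis using B C unfolding traversed_def by blast
    next
      assume "e \<in> traversed xs"
      then obtain i where "e = {xs ! i, xs ! Suc i}" "Suc i < length xs"
        unfolding traversed_def by blast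
      then show ?thesis using A C unfolding traversed_def by blast
    qed
  qed
qed

lemma Kn_mem: "{u,v} \<in> Kn_edges n \<longleftrightarrow> u < n \<and> v < n \<and> u \<noteq> v"
  unfolding Kn_edges_def by (auto simp: doubleton_eq_iff)

lemma Kn_finite: "finite (Kn_edges n)"
proof -
  have "Kn_edges n \<subseteq> Pow {..<n}" unfolding Kn_edges_def by auto
  then show ?thesis by (rule finite_subset) auto
qed

lemma Kn_elem: "e \<in> Kn_edges n \<Longrightarrow> \<exists>u v. e = {u,v} \<and> u < n \<and> v < n \<and> u \<noteq> v"
  unfolding Kn_edges_def by auto

definition fv :: "nat \<Rightarrow> nat set set \<Rightarrow> nat \<Rightarrow> bool" where
  "fv n T v \<longleftrightarrow> (\<forall>w<n. w \<noteq> v \<longrightarrow> {v,w} \<in> T)"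

definition FS :: "nat \<Rightarrow> nat set set \<Rightarrow> nat set" where
  "FS n T = {v. v < n \<and> fv n T v}"

definition cst :: "nat \<Rightarrow> nat \<Rightarrow> real" where
  "cst n i = real (n - 1) / real (n - i)"

definition PhiT :: "nat \<Rightarrow> nat set set \<Rightarrow> nat \<Rightarrow> ennreal" where
  "PhiT n T v = (if Kn_edges n \<subseteq> T then 0 else
     ennreal (real (card (Kn_edges n - T)) +
       (\<Sum>i = (if fv n T v then card (FS n T) else Suc (card (FS n T)))..n-1. cst n i)))"

lemma cst_nonneg: "0 \<le> cst n i" unfolding cst_def by simp

lemma FS_finite: "finite (FS n T)" unfolding FS_def by auto

lemma FS_sub: "FS n T \<subseteq> {..<n}" unfolding FS_def by auto

lemma unused_iff:
  assumes "v < n"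
  shows "unused_edges (Kn_edges n) xs v \<noteq> {} \<longleftrightarrow> \<not> fv n (traversed xs) v"
proof
  assume "unused_edges (Kn_edges n) xs v \<noteq> {}"
  then obtain e where e: "e \<in> Kn_edges n" "v \<in> e" "e \<notin> traversed xs"
    unfolding unused_edges_def by auto
  then obtain a b where ab: "e = {a,b}" "a < n" "b < n" "a \<noteq> b" using Kn_elem by blast
  then obtain w where "e = {v,w}" "w < n" "w \<noteq> v" using e(2) by auto
  then show "\<not> fv n (traversed xs) v" using e unfolding fv_def by auto
next
  assume "\<not> fv n (traversed xs) v"
  then obtain w where "w < n" "w \<noteq> v" "{v,w} \<notin> traversed xs" unfolding fv_def by auto
  then have "{v,w} \<in> unused_edges (Kn_edges n) xs v"
    using assms unfolding unused_edges_def by (auto simp: Kn_mem)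
  then show "unused_edges (Kn_edges n) xs v \<noteq> {}" by auto
qed

lemma covered_iff:
  "Kn_edges n \<subseteq> T \<longleftrightarrow> (\<forall>v<n. fv n T v)"
proof
  assume "Kn_edges n \<subseteq> T"
  then show "\<forall>v<n. fv n T v" unfolding fv_def by (auto simp: Kn_mem)
next
  assume H: "\<forall>v<n. fv n T v"
  show "Kn_edges n \<subseteq> T"
  proof
    fix e assume "e \<in> Kn_edges n"
    then obtain a b where "e = {a,b}" "a < n" "b < n" "a \<noteq> b" using Kn_elem by blast
    then show "e \<in> T" using H unfolding fv_def by auto
  qed
qed

lemma FS_card_lt:
  assumes "\<not> Kn_edges n \<subseteq> T"
  shows "card (FS n T) < n"
proof -
  obtain v where "v < n" "\<not> fv n T v" using assms covered_iff by blast
  then have "FS n T \<subset> {..<n}" using FS_sub unfolding FS_def by auto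
  then show ?thesis by (metis card_lessThan finite_lessThan psubset_card_mono)
qed

lemma nbrs_Kn: "v < n \<Longrightarrow> nbrs (Kn_edges n) v = {..<n} - {v}"
  unfolding nbrs_def by (auto simp: Kn_mem)

lemma sum_tail_mono:
  assumes "a \<le> b"
  shows "(\<Sum>i=b..m. cst n i) \<le> (\<Sum>i=a..m. cst n i)"
  by (rule sum_mono2) (use assms cst_nonneg in auto)

lemma greedy_point:
  assumes v: "v < n" and w: "w < n" "w \<noteq> v" and nt: "{v,w} \<notin> T"
    and nf: "\<not> fv n T v" and nc: "\<not> Kn_edges n \<subseteq> T"
  shows "1 + PhiT n (insert {v,w} T) w \<le> PhiT n T v"
proof -
  let ?T' = "insert {v,w} T"
  let ?U = "card (Kn_edges n - T)"
  let ?k = "card (FS n T)"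
  have vwE: "{v,w} \<in> Kn_edges n" using v w by (simp add: Kn_mem)
  have Ueq: "Kn_edges n - ?T' = (Kn_edges n - T) - {{v,w}}" by auto
  have U1: "?U \<ge> 1"
    using vwE nt Kn_finite by (metis Diff_iff card_0_eq finite_Diff empty_iff less_one not_le)
  have U': "card (Kn_edges n - ?T') = ?U - 1"
    unfolding Ueq using vwE nt Kn_finite by (simp add: card_Diff_singleton)
  have Phi: "PhiT n T v = ennreal (real ?U + (\<Sum>i = Suc ?k..n-1. cst n i))"
    unfolding PhiT_def using nf nc by simp
  have S0: "0 \<le> (\<Sum>i = Suc ?k..n-1. cst n i)" by (rule sum_nonneg) (simp add: cst_nonneg)
  show ?thesis
  proof (cases "Kn_edges n \<subseteq> ?T'")
    case True
    then have "PhiT n ?T' w = 0" unfolding PhiT_def by simp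
    moreover have "1 \<le> real ?U + (\<Sum>i = Suc ?k..n-1. cst n i)" using U1 S0 by linarith
    ultimately show ?thesis unfolding Phi by (simp add: ennreal_1[symmetric] ennreal_leI del: ennreal_1)
  next
    case False
    define k'' where "k'' = (if fv n ?T' w then card (FS n ?T') else Suc (card (FS n ?T')))"
    have sub: "FS n T \<subseteq> FS n ?T'" unfolding FS_def fv_def by auto
    have kk: "?k \<le> card (FS n ?T')" by (rule card_mono[OF FS_finite sub])
    have "Suc ?k \<le> k''"
    proof (cases "fv n ?T' w")
      case True
      have "w \<notin> FS n T" using nt v w unfolding FS_def fv_def by (auto simp: insert_commute)
      moreover have "w \<in> FS n ?T'" using True w unfolding FS_def by auto
      ultimately have "insert w (FS n T) \<subseteq> FS n ?T'" using sub by auto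
      then have "card (insert w (FS n T)) \<le> card (FS n ?T')" by (rule card_mono[OF FS_finite])
      then show ?thesis unfolding k''_def using True \<open>w \<notin> FS n T\<close> FS_finite by simp
    qed (use kk k''_def in auto)
    then have SS: "(\<Sum>i = k''..n-1. cst n i) \<le> (\<Sum>i = Suc ?k..n-1. cst n i)" by (rule sum_tail_mono)
    have S0': "0 \<le> (\<Sum>i = k''..n-1. cst n i)" by (rule sum_nonneg) (simp add: cst_nonneg)
    have "PhiT n ?T' w = ennreal (real (?U - 1) + (\<Sum>i = k''..n-1. cst n i))"
      unfolding PhiT_def k''_def U' using False by simp
    then have "1 + PhiT n ?T' w = ennreal (1 + (real (?U - 1) + (\<Sum>i = k''..n-1. cst n i)))"
      using S0' by (subst ennreal_plus) auto
    also have "\<dots> \<le> PhiT n T v" unfolding Phi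
      using SS U1 by (intro ennreal_leI) (simp add: of_nat_diff)
    finally show ?thesis .
  qed
qed

lemma stuck_alg:
  fixes a b U B :: real
  assumes "0 < a" "0 < b"
  shows "1 + (a * (U + B) + (a - b) * (a / b)) / a = U + (a / b + B)"
  using assms by (simp add: field_simps)

lemma stuck_point:
  assumes n: "2 \<le> n" and v: "v < n" and fvv: "fv n T v" and nc: "\<not> Kn_edges n \<subseteq> T"
  shows "1 + (\<Sum>w\<in>{..<n}-{v}. PhiT n T w) / of_nat (card ({..<n}-{v})) \<le> PhiT n T v"
proof -
  let ?N = "{..<n}-{v}"
  let ?U = "real (card (Kn_edges n - T))"
  define k where "k = card (FS n T)"
  define B where "B = (\<Sum>i = Suc k..n-1. cst n i)"
  have vF: "v \<in> FS n T" using v fvv unfolding FS_def by auto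
  have k1: "1 \<le> k" unfolding k_def using vF FS_finite by (metis One_nat_def Suc_leI card_gt_0_iff empty_iff)
  have kn: "k < n" unfolding k_def using FS_card_lt[OF nc] .
  have A: "(\<Sum>i = k..n-1. cst n i) = cst n k + B"
    unfolding B_def using kn by (subst sum.atLeast_Suc_atMost) auto
  have B0: "0 \<le> B" unfolding B_def by (rule sum_nonneg) (simp add: cst_nonneg)
  have ck0: "0 \<le> cst n k" by (rule cst_nonneg)
  have cardN: "card ?N = n - 1" using v by simp
  have pw: "PhiT n T w = ennreal (?U + B + (if w \<in> FS n T then cst n k else 0))" if "w \<in> ?N" for w
  proof -
    have "fv n T w \<longleftrightarrow> w \<in> FS n T" using that unfolding FS_def by auto
    then show ?thesis unfolding PhiT_def using nc A by (simp add: k_def[symmetric] B_def algebra_simps)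
  qed
  have NF: "?N \<inter> FS n T = FS n T - {v}" using FS_sub by auto
  have cNF: "card (?N \<inter> FS n T) = k - 1" unfolding NF k_def using vF FS_finite by simp
  have "(\<Sum>w\<in>?N. PhiT n T w) = (\<Sum>w\<in>?N. ennreal (?U + B + (if w \<in> FS n T then cst n k else 0)))"
    using pw by (rule sum.cong[OF refl])
  also have "\<dots> = ennreal (\<Sum>w\<in>?N. (?U + B + (if w \<in> FS n T then cst n k else 0)))"
    using B0 ck0 by (intro sum_ennreal) auto
  also have "(\<Sum>w\<in>?N. (?U + B + (if w \<in> FS n T then cst n k else 0)))
      = real (n - 1) * (?U + B) + real (k - 1) * cst n k"
    by (simp add: sum.distrib sum.inter_restrict[symmetric] cardN cNF)
  finally have S: "(\<Sum>w\<in>?N. PhiT n T w) = ennreal (real (n - 1) * (?U + B) + real (k - 1) * cst n k)" .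
  have n1: "0 < real (n - 1)" using n by simp
  have "1 + (\<Sum>w\<in>?N. PhiT n T w) / of_nat (card ?N)
      = ennreal (1 + (real (n - 1) * (?U + B) + real (k - 1) * cst n k) / real (n - 1))"
  proof -
    let ?x = "real (n - 1) * (?U + B) + real (k - 1) * cst n k"
    have x0: "0 \<le> ?x" using B0 ck0 by simp
    have q0: "0 \<le> ?x / real (n - 1)" using x0 n1 by simp
    have "ennreal ?x / of_nat (n - 1) = ennreal (?x / real (n - 1))"
      unfolding ennreal_of_nat_eq_real_of_nat using x0 n1 by (rule divide_ennreal)
    then show ?thesis unfolding S cardN using q0 by (subst ennreal_plus) auto
  qed
  also have "\<dots> \<le> PhiT n T v"
  proof -
    have "PhiT n T v = ennreal (?U + (cst n k + B))"
      unfolding PhiT_def using nc fvv A by (simp add: k_def[symmetric])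
    moreover have "1 + (real (n - 1) * (?U + B) + real (k - 1) * cst n k) / real (n - 1) = ?U + (cst n k + B)"
    proof -
      have nk: "real (n - k) > 0" using kn by simp
      have "real (k - 1) = real (n - 1) - real (n - k)" using k1 kn by (simp add: of_nat_diff)
      then show ?thesis using stuck_alg[OF n1 nk] unfolding cst_def by simp
    qed
    ultimately show ?thesis by simp
  qed
  finally show ?thesis .
qed

definition inv :: "nat \<Rightarrow> nat list \<Rightarrow> bool" where
  "inv n xs \<longleftrightarrow> xs \<noteq> [] \<and> set xs \<subseteq> {..<n}"

definition Phi :: "nat \<Rightarrow> nat list \<Rightarrow> ennreal" where
  "Phi n xs = PhiT n (traversed xs) (last xs)"

lemma inv_last: "inv n xs \<Longrightarrow> last xs < n"
  unfolding inv_def using last_in_set by blast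

lemma step_set:
  assumes n: "2 \<le> n" and I: "inv n xs" and R: "valid_rule (Kn_edges n) R"
    and y: "y \<in> set_pmf (grw_step (Kn_edges n) R xs)"
  shows "\<exists>w. y = xs @ [w] \<and> w < n \<and> w \<noteq> last xs"
proof -
  let ?v = "last xs"
  have v: "?v < n" using inv_last[OF I] .
  show ?thesis
  proof (cases "unused_edges (Kn_edges n) xs ?v \<noteq> {}")
    case True
    then obtain w where w: "w \<in> set_pmf (R xs)" "y = xs @ [w]"
      using y unfolding grw_step_def by auto
    then have "{?v, w} \<in> unused_edges (Kn_edges n) xs ?v" using R True unfolding valid_rule_def by auto
    then have "w < n \<and> w \<noteq> ?v" unfolding unused_edges_def by (auto simp: Kn_mem)
    then show ?thesis using w by auto
  next
    case False
    have ne: "{..<n} - {?v} \<noteq> {}"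
    proof -
      have "card ({..<n} - {?v}) = n - 1" using v by simp
      then show ?thesis using n by (metis card.empty diff_is_0_eq not_less_eq_eq Suc_1)
    qed
    then obtain w where "w \<in> {..<n} - {?v}" "y = xs @ [w]"
      using y False unfolding grw_step_def nbrs_Kn[OF v] by auto
    then show ?thesis by auto
  qed
qed

lemma step_inv:
  assumes "2 \<le> n" "inv n xs" "valid_rule (Kn_edges n) R"
    "y \<in> set_pmf (grw_step (Kn_edges n) R xs)"
  shows "inv n y"
  using step_set[OF assms] assms(2) unfolding inv_def by auto

lemma drift_cov:
  assumes n: "2 \<le> n" and I: "inv n xs" and R: "valid_rule (Kn_edges n) R"
    and c: "Kn_edges n \<subseteq> traversed xs"
  shows "(\<integral>\<^sup>+y. Phi n y \<partial>grw_step (Kn_edges n) R xs) = 0"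
proof -
  have "(\<integral>\<^sup>+y. Phi n y \<partial>grw_step (Kn_edges n) R xs) = (\<integral>\<^sup>+y. 0 \<partial>grw_step (Kn_edges n) R xs)"
  proof (rule nn_integral_cong_AE, rule AE_pmfI)
    fix y assume "y \<in> set_pmf (grw_step (Kn_edges n) R xs)"
    then obtain w where "y = xs @ [w]" using step_set[OF n I R] by blast
    moreover have "xs \<noteq> []" using I unfolding inv_def by auto
    ultimately have "traversed xs \<subseteq> traversed y" by (simp add: traversed_snoc subset_insertI)
    then show "Phi n y = 0" using c unfolding Phi_def PhiT_def by auto
  qed
  then show ?thesis by simp
qed

lemma drift:
  assumes n: "2 \<le> n" and I: "inv n xs" and R: "valid_rule (Kn_edges n) R"
    and nc: "\<not> Kn_edges n \<subseteq> traversed xs"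
  shows "1 + (\<integral>\<^sup>+y. Phi n y \<partial>grw_step (Kn_edges n) R xs) \<le> Phi n xs"
proof -
  let ?v = "last xs"
  let ?T = "traversed xs"
  have v: "?v < n" using inv_last[OF I] .
  have xne: "xs \<noteq> []" using I unfolding inv_def by auto
  show ?thesis
  proof (cases "fv n ?T ?v")
    case False
    then have un: "unused_edges (Kn_edges n) xs ?v \<noteq> {}" using unused_iff[OF v] by simp
    then have st: "grw_step (Kn_edges n) R xs = map_pmf (\<lambda>w. xs @ [w]) (R xs)"
      unfolding grw_step_def by simp
    have pt: "1 + Phi n (xs @ [w]) \<le> Phi n xs" if w: "w \<in> set_pmf (R xs)" for w
    proof -
      have "{?v, w} \<in> unused_edges (Kn_edges n) xs ?v" using R un w unfolding valid_rule_def by auto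
      then have ww: "w < n" "w \<noteq> ?v" "{?v,w} \<notin> ?T" unfolding unused_edges_def by (auto simp: Kn_mem)
      show ?thesis unfolding Phi_def traversed_snoc[OF xne] last_snoc
        by (rule greedy_point[OF v ww False nc])
    qed
    have "1 + (\<integral>\<^sup>+y. Phi n y \<partial>grw_step (Kn_edges n) R xs)
        = (\<integral>\<^sup>+w. 1 \<partial>R xs) + (\<integral>\<^sup>+w. Phi n (xs @ [w]) \<partial>R xs)"
      unfolding st by simp
    also have "\<dots> = (\<integral>\<^sup>+w. 1 + Phi n (xs @ [w]) \<partial>R xs)"
      by (rule nn_integral_add[symmetric]) auto
    also have "\<dots> \<le> (\<integral>\<^sup>+w. Phi n xs \<partial>R xs)"
      by (rule nn_integral_mono_AE, rule AE_pmfI) (rule pt)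
    also have "\<dots> = Phi n xs" by simp
    finally show ?thesis .
  next
    case True
    then have un: "\<not> unused_edges (Kn_edges n) xs ?v \<noteq> {}" using unused_iff[OF v] by simp
    let ?N = "{..<n} - {?v}"
    have st: "grw_step (Kn_edges n) R xs = map_pmf (\<lambda>w. xs @ [w]) (pmf_of_set ?N)"
      unfolding grw_step_def nbrs_Kn[OF v] using un by simp
    have ne: "?N \<noteq> {}"
    proof -
      have "card ?N = n - 1" using v by simp
      then show ?thesis using n by (metis card.empty diff_is_0_eq not_less_eq_eq Suc_1)
    qed
    have eqp: "Phi n (xs @ [w]) = PhiT n ?T w" if "w \<in> ?N" for w
    proof -
      have "{?v, w} \<in> ?T" using True that unfolding fv_def by auto
      then show ?thesis unfolding Phi_def traversed_snoc[OF xne] by (simp add: insert_absorb)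
    qed
    have "(\<integral>\<^sup>+y. Phi n y \<partial>grw_step (Kn_edges n) R xs) = (\<Sum>w\<in>?N. Phi n (xs @ [w])) / of_nat (card ?N)"
      unfolding st using ne by (simp add: nn_integral_pmf_of_set)
    also have "\<dots> = (\<Sum>w\<in>?N. PhiT n ?T w) / of_nat (card ?N)"
      using eqp by simp
    finally have "1 + (\<integral>\<^sup>+y. Phi n y \<partial>grw_step (Kn_edges n) R xs) = 1 + (\<Sum>w\<in>?N. PhiT n ?T w) / of_nat (card ?N)"
      by simp
    also have "\<dots> \<le> PhiT n ?T ?v" by (rule stuck_point[OF n v True nc])
    finally show ?thesis unfolding Phi_def .
  qed
qed

lemma grw_inv:
  assumes n: "2 \<le> n" and v0: "v0 < n" and R: "valid_rule (Kn_edges n) R"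
  shows "xs \<in> set_pmf (grw (Kn_edges n) R v0 t) \<Longrightarrow> inv n xs"
proof (induction t arbitrary: xs)
  case 0
  then show ?case using v0 unfolding inv_def by simp
next
  case (Suc t)
  then obtain ys where "ys \<in> set_pmf (grw (Kn_edges n) R v0 t)" "xs \<in> set_pmf (grw_step (Kn_edges n) R ys)"
    by auto
  then show ?case using Suc.IH step_inv[OF n _ R] by blast
qed

lemma one_step:
  assumes n: "2 \<le> n" and v0: "v0 < n" and R: "valid_rule (Kn_edges n) R"
  shows "ennreal (measure_pmf.prob (grw (Kn_edges n) R v0 t) {xs. \<not> Kn_edges n \<subseteq> traversed xs})
     + (\<integral>\<^sup>+y. Phi n y \<partial>grw (Kn_edges n) R v0 (Suc t))
     \<le> (\<integral>\<^sup>+y. Phi n y \<partial>grw (Kn_edges n) R v0 t)"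
proof -
  let ?M = "grw (Kn_edges n) R v0 t"
  let ?A = "{xs. \<not> Kn_edges n \<subseteq> traversed xs}"
  have "ennreal (measure_pmf.prob ?M ?A) = (\<integral>\<^sup>+x. indicator ?A x \<partial>?M)"
    by (simp add: measure_pmf.emeasure_eq_measure[symmetric])
  moreover have "(\<integral>\<^sup>+y. Phi n y \<partial>grw (Kn_edges n) R v0 (Suc t))
      = (\<integral>\<^sup>+x. (\<integral>\<^sup>+y. Phi n y \<partial>grw_step (Kn_edges n) R x) \<partial>?M)"
    by simp
  ultimately have "ennreal (measure_pmf.prob ?M ?A) + (\<integral>\<^sup>+y. Phi n y \<partial>grw (Kn_edges n) R v0 (Suc t))
      = (\<integral>\<^sup>+x. indicator ?A x + (\<integral>\<^sup>+y. Phi n y \<partial>grw_step (Kn_edges n) R x) \<partial>?M)"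
    by (simp add: nn_integral_add)
  also have "\<dots> \<le> (\<integral>\<^sup>+x. Phi n x \<partial>?M)"
  proof (rule nn_integral_mono_AE, rule AE_pmfI)
    fix x assume x: "x \<in> set_pmf ?M"
    have I: "inv n x" using grw_inv[OF n v0 R x] .
    show "indicator ?A x + (\<integral>\<^sup>+y. Phi n y \<partial>grw_step (Kn_edges n) R x) \<le> Phi n x"
    proof (cases "Kn_edges n \<subseteq> traversed x")
      case True
      then show ?thesis using drift_cov[OF n I R True] by simp
    next
      case False
      then show ?thesis using drift[OF n I R False] by simp
    qed
  qed
  finally show ?thesis .
qed

lemma partial_bound:
  assumes n: "2 \<le> n" and v0: "v0 < n" and R: "valid_rule (Kn_edges n) R"
  shows "(\<Sum>t<T. ennreal (measure_pmf.prob (grw (Kn_edges n) R v0 t) {xs. \<not> Kn_edges n \<subseteq> traversed xs}))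
     + (\<integral>\<^sup>+y. Phi n y \<partial>grw (Kn_edges n) R v0 T) \<le> Phi n [v0]"
proof (induction T)
  case 0
  then show ?case by simp
next
  case (Suc T)
  then show ?case using one_step[OF n v0 R, of T]
    by (simp add: add.assoc) (metis (no_types, lifting) add_left_mono order_trans)
qed

lemma Phi_start:
  assumes v0: "v0 < n"
  shows "Phi n [v0] \<le> ennreal (real (card (Kn_edges n)) + (\<Sum>i=1..n-1. real (n - 1) / real (n - i)))"
proof (cases "Kn_edges n \<subseteq> traversed [v0]")
  case True
  then show ?thesis unfolding Phi_def PhiT_def by simp
next
  case False
  let ?T = "traversed [v0]"
  define k' where "k' = (if fv n ?T v0 then card (FS n ?T) else Suc (card (FS n ?T)))"
  have k1: "1 \<le> k'"
  proof (cases "fv n ?T v0")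
    case True
    then have "v0 \<in> FS n ?T" using v0 unfolding FS_def by simp
    then show ?thesis unfolding k'_def using True FS_finite
      by (metis One_nat_def Suc_leI card_gt_0_iff empty_iff)
  qed (simp add: k'_def)
  have "(\<Sum>i=k'..n-1. cst n i) \<le> (\<Sum>i=1..n-1. cst n i)" by (rule sum_tail_mono[OF k1])
  moreover have "card (Kn_edges n - ?T) \<le> card (Kn_edges n)" using Kn_finite by (rule card_mono) auto
  ultimately show ?thesis unfolding Phi_def PhiT_def using False
    by (auto simp: k'_def[symmetric] cst_def intro!: ennreal_leI)
qed

definition Ssum :: "nat \<Rightarrow> real" where
  "Ssum n = (\<Sum>i=1..n-1. real (n - 1) / real (n - i))"

lemma main_bound:
  assumes v0: "v0 < n" and R: "valid_rule (Kn_edges n) R"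
  shows "expected_edge_cover_time (Kn_edges n) R v0 \<le> ennreal (real (card (Kn_edges n)) + Ssum n)"
proof (cases "2 \<le> n")
  case False
  then have "Kn_edges n = {}" unfolding Kn_edges_def by auto
  then show ?thesis unfolding expected_edge_cover_time_def by simp
next
  case n: True
  show ?thesis unfolding expected_edge_cover_time_def suminf_eq_SUP
  proof (rule SUP_least)
    fix T
    have "(\<Sum>t<T. ennreal (measure_pmf.prob (grw (Kn_edges n) R v0 t) {xs. \<not> Kn_edges n \<subseteq> traversed xs}))
       \<le> (\<Sum>t<T. ennreal (measure_pmf.prob (grw (Kn_edges n) R v0 t) {xs. \<not> Kn_edges n \<subseteq> traversed xs}))
         + (\<integral>\<^sup>+y. Phi n y \<partial>grw (Kn_edges n) R v0 T)" by simp
    also have "\<dots> \<le> Phi n [v0]" by (rule partial_bound[OF n v0 R])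
    also have "\<dots> \<le> ennreal (real (card (Kn_edges n)) + Ssum n)"
      unfolding Ssum_def by (rule Phi_start[OF v0])
    finally show "(\<Sum>t<T. ennreal (measure_pmf.prob (grw (Kn_edges n) R v0 t) {xs. \<not> Kn_edges n \<subseteq> traversed xs}))
       \<le> ennreal (real (card (Kn_edges n)) + Ssum n)" .
  qed
qed

lemma Ssum_harm: "Ssum n = real (n - 1) * harm (n - 1)"
proof -
  have "Ssum n = (\<Sum>i=1..n-1. (\<lambda>j. real (n - 1) / real j) (n - 1 + 1 - i))"
    unfolding Ssum_def by (intro sum.cong) auto
  also have "\<dots> = (\<Sum>j=1..n-1. real (n - 1) / real j)"
    by (rule sum.atLeastAtMost_rev[symmetric])
  also have "\<dots> = real (n - 1) * harm (n - 1)"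
    unfolding harm_def by (simp add: sum_distrib_left divide_inverse)
  finally show ?thesis .
qed

lemma ratio_alg:
  fixes x L g :: real
  assumes "0 < x" "0 < L"
  shows "(x - 1) / x * (1 + (g - 1 / x) * (1 / L)) = ((x - 1) * (L + g - 1 / x)) / (x * L)"
  using assms by (simp add: field_simps)

lemma ratio_lim: "(\<lambda>n. Ssum n / (real n * ln (real n))) \<longlonglongrightarrow> 1"
proof -
  define g where "g n = harm n - ln (real n)" for n
  have g: "g \<longlonglongrightarrow> euler_mascheroni" unfolding g_def by (rule euler_mascheroni_LIMSEQ)
  have l2: "(\<lambda>n. 1 / real n) \<longlonglongrightarrow> 0" by (rule lim_1_over_n)
  have "(\<lambda>n. 1 - 1 / real n) \<longlonglongrightarrow> 1 - 0" by (intro tendsto_intros l2)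
  then have l1': "(\<lambda>n. 1 - 1 / real n) \<longlonglongrightarrow> 1" by simp
  have l1: "(\<lambda>n. (real n - 1) / real n) \<longlonglongrightarrow> 1"
  proof (rule Lim_transform_eventually[OF l1'])
    show "\<forall>\<^sub>F n in sequentially. 1 - 1 / real n = (real n - 1) / real n"
      using eventually_ge_at_top[of "1::nat"] by (rule eventually_mono) (simp add: diff_divide_distrib)
  qed
  have lnt: "filterlim (\<lambda>n. ln (real n)) at_top sequentially"
    by (rule filterlim_compose[OF ln_at_top filterlim_real_sequentially])
  have l3: "(\<lambda>n. 1 / ln (real n)) \<longlonglongrightarrow> 0"
    using tendsto_inverse_0_at_top[OF lnt] by (simp add: divide_inverse)
  have "(\<lambda>n. (g n - 1 / real n) * (1 / ln (real n))) \<longlonglongrightarrow> (euler_mascheroni - 0) * 0"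
    by (intro tendsto_intros g l2 l3)
  then have "(\<lambda>n. (real n - 1) / real n * (1 + (g n - 1 / real n) * (1 / ln (real n)))) \<longlonglongrightarrow> 1 * (1 + 0)"
    by (intro tendsto_intros l1) simp
  then have L: "(\<lambda>n. (real n - 1) / real n * (1 + (g n - 1 / real n) * (1 / ln (real n)))) \<longlonglongrightarrow> 1"
    by simp
  show ?thesis
  proof (rule Lim_transform_eventually[OF L])
    show "\<forall>\<^sub>F n in sequentially. (real n - 1) / real n * (1 + (g n - 1 / real n) * (1 / ln (real n)))
            = Ssum n / (real n * ln (real n))"
      using eventually_ge_at_top[of "2::nat"]
    proof (rule eventually_mono)
      fix n :: nat assume n: "2 \<le> n"
      have ln0: "ln (real n) > 0" using n by simp
      have h: "harm (n - 1) = harm n - 1 / real n"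
      proof -
        have "harm n = (harm (n - 1) :: real) + inverse (real n)"
          using harm_Suc[of "n - 1", where 'a=real] n by simp
        then show ?thesis by (simp add: divide_inverse)
      qed
      have e1: "Ssum n = (real n - 1) * (ln (real n) + g n - 1 / real n)"
        unfolding Ssum_harm h g_def using n by (simp add: of_nat_diff)
      have np: "0 < real n" using n by simp
      show "(real n - 1) / real n * (1 + (g n - 1 / real n) * (1 / ln (real n)))
            = Ssum n / (real n * ln (real n))"
        unfolding e1 by (rule ratio_alg[OF np ln0])
    qed
  qed
qed

lemma div_mult_cancel_aux: "(b::real) \<noteq> 0 \<Longrightarrow> a / b * b = a"
  by simp

theorem mainTheorem3:
  shows "\<exists>f :: nat \<Rightarrow> real. f \<longlonglongrightarrow> 0 \<and>
    (\<forall>n R v0. v0 < n \<and> valid_rule (Kn_edges n) R \<longrightarrow>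
       expected_edge_cover_time (Kn_edges n) R v0
         \<le> ennreal (real (card (Kn_edges n)) + (1 + f n) * real n * ln (real n))) \<and>
    (\<forall>n R v0. v0 < n \<and> valid_rule (Kn_edges n) R \<longrightarrow>
       expected_edge_cover_time (Kn_edges n) R v0
         \<le> ennreal (real (card (Kn_edges n)) + (\<Sum>i=1..n-1. real (n - 1) / real (n - i))))"
proof -
  define f where "f n = (if 2 \<le> n then Ssum n / (real n * ln (real n)) - 1 else 0)" for n
  have "(\<lambda>n. Ssum n / (real n * ln (real n)) - 1) \<longlonglongrightarrow> 1 - 1"
    by (intro tendsto_intros ratio_lim)
  then have L: "(\<lambda>n. Ssum n / (real n * ln (real n)) - 1) \<longlonglongrightarrow> 0" by simp
  have ev: "\<forall>\<^sub>F n in sequentially. Ssum n / (real n * ln (real n)) - 1 = f n"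
    using eventually_ge_at_top[of "2::nat"] by (rule eventually_mono) (simp add: f_def)
  have f0: "f \<longlonglongrightarrow> 0" by (rule Lim_transform_eventually[OF L ev])
  have fe: "(1 + f n) * real n * ln (real n) = Ssum n" for n
  proof (cases "2 \<le> n")
    case True
    then have p: "real n * ln (real n) > 0" by simp
    have "(1 + f n) * real n * ln (real n) = (Ssum n / (real n * ln (real n))) * (real n * ln (real n))"
      unfolding f_def using True by simp
    also have "\<dots> = Ssum n" using p by (intro div_mult_cancel_aux) (metis less_irrefl)
    finally show ?thesis .
  next
    case False
    then have "n = 0 \<or> n = 1" by auto
    then show ?thesis unfolding f_def Ssum_def by auto
  qed
  have b1: "\<forall>n R v0. v0 < n \<and> valid_rule (Kn_edges n) R \<longrightarrow>
       expected_edge_cover_time (Kn_edges n) R v0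
         \<le> ennreal (real (card (Kn_edges n)) + (1 + f n) * real n * ln (real n))"
    unfolding fe using main_bound by blast
  have b2: "\<forall>n R v0. v0 < n \<and> valid_rule (Kn_edges n) R \<longrightarrow>
       expected_edge_cover_time (Kn_edges n) R v0
         \<le> ennreal (real (card (Kn_edges n)) + (\<Sum>i=1..n-1. real (n - 1) / real (n - i)))"
    using main_bound unfolding Ssum_def by blast
  show ?thesis using f0 b1 b2 by blast
qed

end
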